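(* Let $m\ge1$, real $p,q$ with $p\wedge q>m-1$, $r=p-m$, $s=q-m$, and let $x_1(t),\dots,x_m(t)$ be the roots of the averaged characteristic polynomial $\chi_t^{(r,s,m)}$ of the Jacobi eigenvalue process (started at a deterministic point of $[0,1]^m$). Let $m_\ell(t)=\frac1m\sum_{i=1}^mx_i(t)^\ell$, $\ell\ge0$ (so $m_0=1$). Then for $t>0$ $$\frac{d}{dt}m_1(t)=p-(p+q)m_1(t),$$ and for every $\ell\ge2$, $$\frac{d}{dt}m_\ell(t)=-\ell(p+q-\ell+1)m_\ell(t)+\ell(p-\ell+1)m_{\ell-1}(t)+m\ell\sum_{k=0}^{\ell-2}\big(m_k(t)-m_{k+1}(t)\big)m_{\ell-1-k}(t).$$
   Context: The Jacobi eigenvalue process solves $d\lambda_t^i=\sqrt{2\lambda_t^i(1-\lambda_t^i)}dB_t^i+[p-(p+q)\lambda_t^i+\sum_{j\ne i}\frac{\lambda_t^i(1-\lambda_t^j)+\lambda_t^j(1-\lambda_t^i)}{\lambda_t^i-\lambda_t^j}]dt$ with independent Brownian motions; $\chi_t^{(r,s,m)}(x)=\mathbb E\prod_i(x-\lambda_t^i)$. Its roots are real, lie in $(0,1)$ for $t>0$, and (suitably indexed) satisfy $\dot x_j=p-(p+q)x_j+\sum_{k\ne j}\frac{x_j(1-x_k)+x_k(1-x_j)}{x_j-x_k}$. *)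

theory Defs
  imports "HOL-Analysis.Analysis"
begin

text \<open>Drift of the root dynamics of the averaged characteristic polynomial
  of the Jacobi eigenvalue process (m roots indexed by 0..m-1).\<close>
definition jacobi_root_drift :: "nat \<Rightarrow> real \<Rightarrow> real \<Rightarrow> (nat \<Rightarrow> real) \<Rightarrow> nat \<Rightarrow> real" where
  "jacobi_root_drift m p q y j =
     p - (p + q) * y j
     + (\<Sum>k\<in>{..<m} - {j}. (y j * (1 - y k) + y k * (1 - y j)) / (y j - y k))"

definition root_moment :: "nat \<Rightarrow> (nat \<Rightarrow> real \<Rightarrow> real) \<Rightarrow> nat \<Rightarrow> real \<Rightarrow> real" where
  "root_moment m x l t = (1 / real m) * (\<Sum>i<m. x i t ^ l)"

end

theory Submission
  imports Defs
begin

definition psum :: "nat \<Rightarrow> (nat \<Rightarrow> real) \<Rightarrow> nat \<Rightarrow> real" where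
  "psum m y k = (\<Sum>i<m. y i ^ k)"

lemma offdiag_if:
  fixes m :: nat
  shows
  "(\<Sum>k\<in>{..<m}-{j}. f k) = (\<Sum>k<m. if k = j then 0 else (f k::real))"
  by (subst sum.If_cases) (simp_all add: Diff_eq singleton_conv)

lemma symmetrize:
  fixes y :: "nat \<Rightarrow> real"
  assumes gs: "\<And>a b. g a b = g b a"
  shows "2 * (\<Sum>j<m. \<Sum>k\<in>{..<m}-{j}. y j ^ n * g (y j) (y k) / (y j - y k))
       = (\<Sum>j<m. \<Sum>k\<in>{..<m}-{j}. (y j ^ n - y k ^ n) * g (y j) (y k) / (y j - y k))"
proof -
  define F where "F j k = (if k = j then 0 else y j ^ n * g (y j) (y k) / (y j - y k))" for j k
  have L: "(\<Sum>j<m. \<Sum>k\<in>{..<m}-{j}. y j ^ n * g (y j) (y k) / (y j - y k)) = (\<Sum>j<m. \<Sum>k<m. F j k)"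
    by (simp add: offdiag_if F_def)
  have sw: "(\<Sum>j<m. \<Sum>k<m. F j k) = (\<Sum>j<m. \<Sum>k<m. F k j)"
    by (rule sum.swap)
  have "2 * (\<Sum>j<m. \<Sum>k<m. F j k) = (\<Sum>j<m. \<Sum>k<m. F j k + F k j)"
    using sw by (simp add: sum.distrib)
  also have "\<dots> = (\<Sum>j<m. \<Sum>k<m. if k = j then 0 else (y j ^ n - y k ^ n) * g (y j) (y k) / (y j - y k))"
  proof (intro sum.cong refl)
    fix j k
    show "F j k + F k j = (if k = j then 0 else (y j ^ n - y k ^ n) * g (y j) (y k) / (y j - y k))"
    proof (cases "k = j")
      case False
      have "y k ^ n * g (y j) (y k) / (y k - y j) = - (y k ^ n * g (y j) (y k) / (y j - y k))"
        by (metis minus_diff_eq divide_minus_right)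
      then show ?thesis using False unfolding F_def
        by (simp add: gs[of "y k" "y j"] diff_divide_distrib left_diff_distrib)
    qed (simp add: F_def)
  qed
  finally show ?thesis using L by (simp add: offdiag_if)
qed

definition hh :: "nat \<Rightarrow> real \<Rightarrow> real \<Rightarrow> real" where
  "hh n a b = (\<Sum>i<n. b^(n - Suc i) * a^i)"

lemma quot_hh:
  assumes "a \<noteq> (b::real)"
  shows "(a ^ n - b ^ n) * c / (a - b) = hh n a b * c"
  using assms by (simp add: power_diff_sumr2 hh_def)

lemma hh_expand:
  "hh n a b * (a + b - 2 * a * b) =
   (\<Sum>i<n. a ^ Suc i * b ^ (n - Suc i) + a ^ i * b ^ (n - i) - 2 * (a ^ Suc i * b ^ (n - i)))"
  unfolding hh_def sum_distrib_right
proof (intro sum.cong refl)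
  fix i assume "i \<in> {..<n}"
  then have e: "b ^ (n - i) = b * b ^ (n - Suc i)"
    by (metis Suc_diff_Suc lessThan_iff power_Suc)
  show "b ^ (n - Suc i) * a ^ i * (a + b - 2 * a * b) =
        a ^ Suc i * b ^ (n - Suc i) + a ^ i * b ^ (n - i) - 2 * (a ^ Suc i * b ^ (n - i))"
    unfolding e by (simp add: algebra_simps)
qed

lemma double_pow: "(\<Sum>j<m. \<Sum>k<m. y j ^ a * y k ^ b) = psum m y a * psum m y b"
  by (simp add: psum_def sum_product)

lemma full_sum:
  "(\<Sum>j<m. \<Sum>k<m. hh n (y j) (y k) * (y j + y k - 2 * y j * y k)) =
   (\<Sum>i<n. psum m y (Suc i) * psum m y (n - Suc i) + psum m y i * psum m y (n - i)
            - 2 * (psum m y (Suc i) * psum m y (n - i)))"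
proof -
  have "(\<Sum>j<m. \<Sum>k<m. hh n (y j) (y k) * (y j + y k - 2 * y j * y k)) =
     (\<Sum>j<m. \<Sum>k<m. \<Sum>i<n. y j ^ Suc i * y k ^ (n - Suc i) + y j ^ i * y k ^ (n - i) - 2 * (y j ^ Suc i * y k ^ (n - i)))"
    by (simp add: hh_expand)
  also have "\<dots> = (\<Sum>j<m. \<Sum>i<n. \<Sum>k<m. y j ^ Suc i * y k ^ (n - Suc i) + y j ^ i * y k ^ (n - i) - 2 * (y j ^ Suc i * y k ^ (n - i)))"
    by (rule sum.cong[OF refl], rule sum.swap)
  also have "\<dots> = (\<Sum>i<n. \<Sum>j<m. \<Sum>k<m. y j ^ Suc i * y k ^ (n - Suc i) + y j ^ i * y k ^ (n - i) - 2 * (y j ^ Suc i * y k ^ (n - i)))"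
    by (rule sum.swap)
  also have "\<dots> = (\<Sum>i<n. psum m y (Suc i) * psum m y (n - Suc i) + psum m y i * psum m y (n - i)
            - 2 * (psum m y (Suc i) * psum m y (n - i)))"
  proof (intro sum.cong refl)
    fix i
    show "(\<Sum>j<m. \<Sum>k<m. y j ^ Suc i * y k ^ (n - Suc i) + y j ^ i * y k ^ (n - i) - 2 * (y j ^ Suc i * y k ^ (n - i)))
       = psum m y (Suc i) * psum m y (n - Suc i) + psum m y i * psum m y (n - i)
            - 2 * (psum m y (Suc i) * psum m y (n - i))"
      by (simp only: sum.distrib sum_subtractf sum_distrib_left[symmetric] sum_distrib_right[symmetric] psum_def[symmetric])
  qed
  finally show ?thesis .
qed

lemma hh_diag: "hh n a a * (a + a - 2 * a * a) = 2 * real n * (a ^ n - a ^ Suc n)"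
proof -
  have "hh n a a = real n * a ^ (n - 1)"
    unfolding hh_def
  proof -
    have "(\<Sum>i<n. a ^ (n - Suc i) * a ^ i) = (\<Sum>i<n. a ^ (n - 1))"
    proof (intro sum.cong refl)
      fix i assume "i \<in> {..<n}"
      then have "n - Suc i + i = n - 1" by auto
      then show "a ^ (n - Suc i) * a ^ i = a ^ (n - 1)" by (metis power_add)
    qed
    then show "(\<Sum>i<n. a ^ (n - Suc i) * a ^ i) = real n * a ^ (n - 1)" by simp
  qed
  then show ?thesis
  proof (cases n)
    case (Suc k)
    have "a ^ Suc k = a * a ^ k" "a ^ Suc (Suc k) = a * a * a ^ k" by simp_all
    then show ?thesis using Suc \<open>hh n a a = real n * a ^ (n - 1)\<close> by (simp add: algebra_simps)
  qed simp
qed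


lemma diag_sum:
  "(\<Sum>j<m. hh n (y j) (y j) * (y j + y j - 2 * y j * y j)) = 2 * real n * (psum m y n - psum m y (Suc n))"
proof -
  have "(\<Sum>j<m. hh n (y j) (y j) * (y j + y j - 2 * y j * y j)) = (\<Sum>j<m. 2 * real n * (y j ^ n - y j ^ Suc n))"
    by (intro sum.cong refl) (rule hh_diag)
  also have "\<dots> = 2 * real n * (psum m y n - psum m y (Suc n))"
    unfolding psum_def by (simp only: sum_distrib_left[symmetric] sum_subtractf)
  finally show ?thesis .
qed

lemma reversal:
  "(\<Sum>i<n. psum m y (Suc i) * psum m y (n - Suc i)) = (\<Sum>i<n. psum m y i * psum m y (n - i))"
proof -
  have "(\<Sum>i<n. psum m y i * psum m y (n - i)) = (\<Sum>i<n. psum m y (n - Suc i) * psum m y (n - (n - Suc i)))"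
    by (rule sum.nat_diff_reindex[symmetric])
  also have "\<dots> = (\<Sum>i<n. psum m y (Suc i) * psum m y (n - Suc i))"
    by (intro sum.cong refl) (simp add: Suc_diff_Suc)
  finally show ?thesis by simp
qed

lemma drift_identity:
  fixes y :: "nat \<Rightarrow> real"
  assumes dist: "\<And>j k. j < m \<Longrightarrow> k < m \<Longrightarrow> j \<noteq> k \<Longrightarrow> y j \<noteq> y k"
  shows "(\<Sum>j<m. real (Suc n) * (jacobi_root_drift m p q y j * y j ^ n)) =
     real (Suc n) * (p * psum m y n - (p + q) * psum m y (Suc n)
       + ((\<Sum>i<n. (psum m y i - psum m y (Suc i)) * psum m y (n - i))
          - real n * psum m y n + real n * psum m y (Suc n)))"
proof -
  define G where "G a b = a * (1 - b) + b * (1 - a)" for a b :: real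
  have Gs: "\<And>a b. G a b = G b a" by (simp add: G_def algebra_simps)
  define T where "T = (\<Sum>j<m. \<Sum>k\<in>{..<m}-{j}. y j ^ n * G (y j) (y k) / (y j - y k))"
  have "2 * T = (\<Sum>j<m. \<Sum>k\<in>{..<m}-{j}. (y j ^ n - y k ^ n) * G (y j) (y k) / (y j - y k))"
    unfolding T_def by (rule symmetrize[OF Gs])
  also have "\<dots> = (\<Sum>j<m. \<Sum>k\<in>{..<m}-{j}. hh n (y j) (y k) * (y j + y k - 2 * y j * y k))"
  proof (intro sum.cong refl)
    fix j k assume "j \<in> {..<m}" "k \<in> {..<m}-{j}"
    then have "y j \<noteq> y k" using dist by auto
    then show "(y j ^ n - y k ^ n) * G (y j) (y k) / (y j - y k) = hh n (y j) (y k) * (y j + y k - 2 * y j * y k)"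
    proof -
      have Geq: "G (y j) (y k) = y j + y k - 2 * y j * y k" by (simp add: G_def algebra_simps)
      show ?thesis using quot_hh[OF \<open>y j \<noteq> y k\<close>, of n "G (y j) (y k)"] Geq by simp
    qed
  qed
  also have "\<dots> = (\<Sum>j<m. \<Sum>k<m. hh n (y j) (y k) * (y j + y k - 2 * y j * y k))
                   - (\<Sum>j<m. hh n (y j) (y j) * (y j + y j - 2 * y j * y j))"
  proof -
    have "(\<Sum>k\<in>{..<m}-{j}. hh n (y j) (y k) * (y j + y k - 2 * y j * y k)) =
          (\<Sum>k<m. hh n (y j) (y k) * (y j + y k - 2 * y j * y k)) - hh n (y j) (y j) * (y j + y j - 2 * y j * y j)"
      if "j < m" for j
      using that by (simp add: sum_diff1)
    then have "(\<Sum>j<m. \<Sum>k\<in>{..<m}-{j}. hh n (y j) (y k) * (y j + y k - 2 * y j * y k)) =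
       (\<Sum>j<m. (\<Sum>k<m. hh n (y j) (y k) * (y j + y k - 2 * y j * y k)) - hh n (y j) (y j) * (y j + y j - 2 * y j * y j))"
      by (intro sum.cong refl) simp
    then show ?thesis by (simp only: sum_subtractf)
  qed
  also have "\<dots> = 2 * ((\<Sum>i<n. (psum m y i - psum m y (Suc i)) * psum m y (n - i))
          - real n * psum m y n + real n * psum m y (Suc n))"
    unfolding full_sum diag_sum
    using reversal[where n=n and m=m and y=y]
    by (simp add: sum.distrib sum_subtractf algebra_simps sum_distrib_left)
  finally have T2: "T = (\<Sum>i<n. (psum m y i - psum m y (Suc i)) * psum m y (n - i))
          - real n * psum m y n + real n * psum m y (Suc n)" by simp
  have "(\<Sum>j<m. real (Suc n) * (jacobi_root_drift m p q y j * y j ^ n)) =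
        real (Suc n) * (\<Sum>j<m. p * y j ^ n - (p + q) * y j ^ Suc n
            + (\<Sum>k\<in>{..<m}-{j}. y j ^ n * G (y j) (y k) / (y j - y k)))"
    unfolding sum_distrib_left
    by (intro sum.cong refl) (simp add: jacobi_root_drift_def G_def sum_distrib_left sum_distrib_right algebra_simps)
  also have "\<dots> = real (Suc n) * (p * psum m y n - (p + q) * psum m y (Suc n) + T)"
    by (simp add: T_def psum_def sum.distrib sum_subtractf sum_distrib_left del: power_Suc)
  finally show ?thesis using T2 by simp
qed

lemma arith1: "0 < (M::real) \<Longrightarrow> 1 / M * (real (Suc 0) * (p * M - (p + q) * S)) = p - (p + q) * (S / M)"
  by (simp add: divide_simps)

lemma arith2: "0 < (M::real) \<Longrightarrow> L = N + 1 \<Longrightarrow>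
  1 / M * (L * (p * A - (p + q) * B + (C - N * A + N * B))) =
  - L * (p + q - L + 1) * (B / M) + L * (p - L + 1) * (A / M) + M * L * (C / (M * M))"
  by (simp add: field_simps)

theorem mainTheorem8:
  fixes m :: nat and p q :: real and x :: "nat \<Rightarrow> real \<Rightarrow> real"
  assumes m_pos: "m \<ge> 1"
    and pq: "min p q > real m - 1"
    and roots_in: "\<And>t i. t > 0 \<Longrightarrow> i < m \<Longrightarrow> 0 < x i t \<and> x i t < 1"
    and roots_distinct: "\<And>t i j. t > 0 \<Longrightarrow> i < m \<Longrightarrow> j < m \<Longrightarrow> i \<noteq> j \<Longrightarrow> x i t \<noteq> x j t"
    and roots_ode: "\<And>t j. t > 0 \<Longrightarrow> j < m \<Longrightarrow>
        ((\<lambda>s. x j s) has_real_derivative jacobi_root_drift m p q (\<lambda>i. x i t) j) (at t)"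
  shows "\<forall>t>0.
      ((\<lambda>s. root_moment m x 1 s) has_real_derivative (p - (p + q) * root_moment m x 1 t)) (at t)
    \<and> (\<forall>l\<ge>2. ((\<lambda>s. root_moment m x l s) has_real_derivative
          (- real l * (p + q - real l + 1) * root_moment m x l t
           + real l * (p - real l + 1) * root_moment m x (l - 1) t
           + real m * real l * (\<Sum>k=0..l-2. (root_moment m x k t - root_moment m x (k+1) t)
                                             * root_moment m x (l - 1 - k) t))) (at t))"
proof (intro allI impI)
  fix t :: real assume t: "t > 0"
  define y where "y = (\<lambda>i. x i t)"
  have mpos: "real m > 0" using m_pos by simp
  have dist: "\<And>j k. j < m \<Longrightarrow> k < m \<Longrightarrow> j \<noteq> k \<Longrightarrow> y j \<noteq> y k"
    using roots_distinct t by (simp add: y_def)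
  have rm: "\<And>k. root_moment m x k t = psum m y k / real m"
    by (simp add: root_moment_def psum_def y_def)
  have S0: "psum m y 0 = real m" by (simp add: psum_def)
  have D: "((\<lambda>s. root_moment m x (Suc n) s) has_real_derivative
      (1 / real m) * (\<Sum>j<m. real (Suc n) * (jacobi_root_drift m p q y j * y j ^ n))) (at t)" for n
  proof -
    have "((\<lambda>s. x j s ^ Suc n) has_real_derivative real (Suc n) * (jacobi_root_drift m p q y j * y j ^ n)) (at t)"
      if "j < m" for j
      using DERIV_power[OF roots_ode[OF t that], of "Suc n"] by (simp add: y_def)
    then show ?thesis unfolding root_moment_def
      by (intro DERIV_cmult DERIV_sum) auto
  qed
  define E where "E n = p * psum m y n - (p + q) * psum m y (Suc n)
       + ((\<Sum>i<n. (psum m y i - psum m y (Suc i)) * psum m y (n - i))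
          - real n * psum m y n + real n * psum m y (Suc n))" for n
  have D2: "((\<lambda>s. root_moment m x (Suc n) s) has_real_derivative (1 / real m) * (real (Suc n) * E n)) (at t)" for n
    using D[of n] drift_identity[OF dist, where n=n and p=p and q=q] by (simp add: E_def)
  show "((\<lambda>s. root_moment m x 1 s) has_real_derivative (p - (p + q) * root_moment m x 1 t)) (at t)
    \<and> (\<forall>l\<ge>2. ((\<lambda>s. root_moment m x l s) has_real_derivative
          (- real l * (p + q - real l + 1) * root_moment m x l t
           + real l * (p - real l + 1) * root_moment m x (l - 1) t
           + real m * real l * (\<Sum>k=0..l-2. (root_moment m x k t - root_moment m x (k+1) t)
                                             * root_moment m x (l - 1 - k) t))) (at t))"
  proof (intro conjI allI impI)
    show "((\<lambda>s. root_moment m x 1 s) has_real_derivative (p - (p + q) * root_moment m x 1 t)) (at t)"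
    proof -
      have E0: "E 0 = p * real m - (p + q) * psum m y 1" by (simp add: E_def S0)
      have e: "1 / real m * (real (Suc 0) * E 0) = p - (p + q) * root_moment m x 1 t"
      proof -
        have "1 / real m * (real (Suc 0) * (p * real m - (p + q) * psum m y 1)) = p - (p + q) * (psum m y 1 / real m)"
          using arith1[OF mpos] .
        then show ?thesis by (simp only: E0 rm)
      qed
      show ?thesis using DERIV_cong[OF D2[of 0] e] by simp
    qed
  next
    fix l :: nat assume l: "2 \<le> l"
    define n where "n = l - 1"
    have n: "l = Suc n" "n \<ge> 1" using l by (auto simp: n_def)
    have nn: "Suc n - 1 = n" by simp
    have idx: "{0..l-2} = {..<n}" using n by auto
    have sm: "(\<Sum>k=0..l-2. (root_moment m x k t - root_moment m x (k+1) t) * root_moment m x (l - 1 - k) t)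
       = (\<Sum>i<n. (psum m y i - psum m y (Suc i)) * psum m y (n - i)) / (real m * real m)"
      unfolding idx rm using n by (simp add: sum_divide_distrib diff_divide_distrib) (intro sum.cong refl, simp add: diff_divide_distrib[symmetric])
    have e0: "1 / real m * (real (Suc n) * E n) =
        - real (Suc n) * (p + q - real (Suc n) + 1) * (psum m y (Suc n) / real m)
        + real (Suc n) * (p - real (Suc n) + 1) * (psum m y n / real m)
        + real m * real (Suc n) * ((\<Sum>i<n. (psum m y i - psum m y (Suc i)) * psum m y (n - i)) / (real m * real m))"
      unfolding E_def by (rule arith2[OF mpos]) simp
    have e: "1 / real m * (real (Suc n) * E n) =
          - real l * (p + q - real l + 1) * root_moment m x l t
           + real l * (p - real l + 1) * root_moment m x (l - 1) t
           + real m * real l * (\<Sum>k=0..l-2. (root_moment m x k t - root_moment m x (k+1) t)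
                                             * root_moment m x (l - 1 - k) t)"
      unfolding sm unfolding rm n(1) nn by (rule e0)
    have "((\<lambda>s. root_moment m x (Suc n) s) has_real_derivative
          (- real l * (p + q - real l + 1) * root_moment m x l t
           + real l * (p - real l + 1) * root_moment m x (l - 1) t
           + real m * real l * (\<Sum>k=0..l-2. (root_moment m x k t - root_moment m x (k+1) t)
                                             * root_moment m x (l - 1 - k) t))) (at t)"
      by (rule DERIV_cong[OF D2[of n] e])
    then show "((\<lambda>s. root_moment m x l s) has_real_derivative
          (- real l * (p + q - real l + 1) * root_moment m x l t
           + real l * (p - real l + 1) * root_moment m x (l - 1) t
           + real m * real l * (\<Sum>k=0..l-2. (root_moment m x k t - root_moment m x (k+1) t)
                                             * root_moment m x (l - 1 - k) t))) (at t)"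
      unfolding n(1) .
  qed
qed

end
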